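(* Let $q\in[1,2]$, $J,L\in\mathbb N$, let $\mathbf C_0$ be a fixed $J\times J$ symmetric positive-definite matrix, and let $\kappa>0$ be random with hyper-prior $\kappa^{q/2}\sim\Gamma^{-1}(\alpha,\beta)$ (inverse-gamma with shape $\alpha>0$, scale $\beta>0$). Suppose that, conditionally on $\kappa$, $\boldsymbol\xi_1,\dots,\boldsymbol\xi_L\in\mathbb R^J$ are i.i.d. $\mathrm{q\text{-}ED}_J(\mathbf 0,\kappa\mathbf C_0)$. Let $r_{0,\ell}=\boldsymbol\xi_\ell^\top\mathbf C_0^{-1}\boldsymbol\xi_\ell$. Then $$\kappa^{q/2}\mid\boldsymbol\xi_1,\dots,\boldsymbol\xi_L\sim\Gamma^{-1}(\alpha',\beta'),\qquad \alpha'=\alpha+\frac{JL}2,\qquad \beta'=\beta+\frac12\sum_{\ell=1}^Lr_{0,\ell}^{q/2}.$$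
   Context: $\mathrm{q\text{-}ED}_J(\mathbf 0,\mathbf C)$ denotes the multivariate $q$-exponential distribution on $\mathbb R^J$ with density $p(\boldsymbol\xi)=\frac q2(2\pi)^{-J/2}|\mathbf C|^{-1/2}r^{(\frac q2-1)\frac J2}\exp\{-\frac12r^{q/2}\}$, $r=\boldsymbol\xi^\top\mathbf C^{-1}\boldsymbol\xi$. $\Gamma^{-1}(\alpha,\beta)$ has density $\frac{\beta^\alpha}{\Gamma(\alpha)}x^{-\alpha-1}e^{-\beta/x}$ on $x>0$. *)

theory Defs
  imports "HOL-Analysis.Analysis"
begin

definition inv_gamma_density :: "real \<Rightarrow> real \<Rightarrow> real \<Rightarrow> real" where
  "inv_gamma_density a b x =
     (if x > 0 then b powr a / Gamma a * x powr (- a - 1) * exp (- b / x) else 0)"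

text \<open>Density of the multivariate q-exponential distribution q-ED_J(0, C) on R^J,
  where J = CARD('n).\<close>
definition qED_density :: "real \<Rightarrow> real^'n^'n \<Rightarrow> real^'n \<Rightarrow> real" where
  "qED_density q C xi =
     (let r = xi \<bullet> (matrix_inv C *v xi) in
        q / 2 * (2 * pi) powr (- real CARD('n) / 2) * \<bar>det C\<bar> powr (- 1 / 2)
        * r powr ((q / 2 - 1) * real CARD('n) / 2) * exp (- 1 / 2 * r powr (q / 2)))"

text \<open>Joint density of (tau, xi_1..xi_L) where tau = kappa^(q/2) ~ InvGamma(alpha, beta)
  and, given kappa = tau^(2/q), the xi_l are iid q-ED_J(0, kappa C0).\<close>
definition joint_density ::
  "real \<Rightarrow> real \<Rightarrow> real \<Rightarrow> real^'n^'n \<Rightarrow> nat \<Rightarrow> (nat \<Rightarrow> real^'n) \<Rightarrow> real \<Rightarrow> real" where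
  "joint_density q \<alpha> \<beta> C0 L xi \<tau> =
     inv_gamma_density \<alpha> \<beta> \<tau> * (\<Prod>l<L. qED_density q ((\<tau> powr (2 / q)) *\<^sub>R C0) (xi l))"

definition posterior_density ::
  "real \<Rightarrow> real \<Rightarrow> real \<Rightarrow> real^'n^'n \<Rightarrow> nat \<Rightarrow> (nat \<Rightarrow> real^'n) \<Rightarrow> real \<Rightarrow> real" where
  "posterior_density q \<alpha> \<beta> C0 L xi \<tau> =
     joint_density q \<alpha> \<beta> C0 L xi \<tau> / integral\<^sup>L lborel (joint_density q \<alpha> \<beta> C0 L xi)"

end

theory Submission
  imports Defs
begin

lemma Gamma_real_Ioi:
  fixes a :: real assumes "a > 0"
  shows "((\<lambda>t. t powr (a - 1) / exp t) has_integral Gamma a) {0<..}"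
proof -
  have "((\<lambda>t. t powr (a - 1) / exp t) has_integral Gamma a) {0..}"
    by (rule Gamma_integral_real) fact
  hence "((\<lambda>t. if t \<in> {0<..} then t powr (a - 1) / exp t else 0) has_integral Gamma a) {0..}"
    by (rule has_integral_spike [of "{0}", rotated 2]) auto
  also have "?this = ?thesis"
    by (subst has_integral_restrict) auto
  finally show ?thesis .
qed

lemma inv_gamma_Ioi:
  fixes a b :: real assumes a: "a > 0" and b: "b > 0"
  shows "((\<lambda>x. b powr a * x powr (-a-1) * exp (-b/x)) has_integral Gamma a) {0<..}"
proof -
  let ?f = "\<lambda>t::real. t powr (a - 1) / exp t"
  have fi: "?f absolutely_integrable_on {0<..}"
    using Gamma_real_Ioi[OF a] by (intro nonnegative_absolutely_integrable_1) auto
  have fI: "integral {0<..} ?f = Gamma a"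
    using Gamma_real_Ioi[OF a] by (rule integral_unique)
  have img: "(\<lambda>x. b / x) ` {0<..} = ({0<..} :: real set)"
  proof safe
    fix y :: real assume "y > 0"
    then show "y \<in> (\<lambda>x. b / x) ` {0<..}" using b
      by (intro image_eqI[of _ _ "b / y"]) auto
  qed (use b in auto)
  have ch: "((\<lambda>x. \<bar>- b / x^2\<bar> * ?f (b / x)) absolutely_integrable_on {0<..} \<and>
        integral {0<..} (\<lambda>x. \<bar>- b / x^2\<bar> * ?f (b / x)) = Gamma a) \<longleftrightarrow>
        (?f absolutely_integrable_on ((\<lambda>x. b / x) ` {0<..}) \<and> integral ((\<lambda>x. b / x) ` {0<..}) ?f = Gamma a)"
  proof (rule has_absolute_integral_change_of_variables_1')
    show "({0<..}::real set) \<in> sets lebesgue" by simp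
  next
    fix x :: real assume "x \<in> {0<..}"
    then show "((\<lambda>x. b / x) has_field_derivative (- b / x^2)) (at x within {0<..})"
      by (auto intro!: derivative_eq_intros simp: power2_eq_square)
  next
    show "inj_on (\<lambda>x. b / x) {0<..}" using b by (auto simp: inj_on_def)
  qed
  have "(\<lambda>x. \<bar>- b / x^2\<bar> * ?f (b / x)) absolutely_integrable_on {0<..} \<and>
        integral {0<..} (\<lambda>x. \<bar>- b / x^2\<bar> * ?f (b / x)) = Gamma a"
    unfolding ch img using fi fI by blast
  moreover have eq: "\<bar>- b / x^2\<bar> * ?f (b / x) = b powr a * x powr (-a-1) * exp (-b/x)"
    if "x \<in> {0<..}" for x
  proof -
    from that have x: "x > 0" by simp
    have 1: "\<bar>- b / x^2\<bar> = b * x powr (-2)"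
    proof -
      have "x powr (-2) = inverse (x ^ 2)" using x by (simp add: powr_minus powr_numeral)
      then show ?thesis using b by (simp add: divide_inverse)
    qed
    have 2: "(b / x) powr (a - 1) = b powr (a - 1) * x powr (1 - a)"
      using x b by (simp add: powr_divide powr_minus_divide powr_diff divide_simps)
    have 3: "?f (b / x) = b powr (a - 1) * x powr (1 - a) * exp (-(b/x))"
      unfolding 2[symmetric] by (simp only: exp_minus divide_inverse)
    have "\<bar>- b / x^2\<bar> * ?f (b / x) = (b * b powr (a - 1)) * (x powr (-2) * x powr (1 - a)) * exp (-(b/x))"
      unfolding 1 3 by (simp only: mult_ac)
    also have "b * b powr (a - 1) = b powr a" using b by (simp add: powr_mult_base)
    also have "x powr (-2) * x powr (1 - a) = x powr (-a-1)"
    proof -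
      have "x powr (-2) * x powr (1 - a) = x powr (-2 + (1 - a))" by (rule powr_add[symmetric])
      also have "-2 + (1 - a) = -a - 1" by simp
      finally show ?thesis .
    qed
    finally show ?thesis by simp
  qed
  ultimately have "((\<lambda>x. \<bar>- b / x^2\<bar> * ?f (b / x)) has_integral Gamma a) {0<..}"
    using set_lebesgue_integral_eq_integral(1) has_integral_integral by metis
  then show ?thesis
    by (rule has_integral_eq[rotated]) (rule eq)
qed

lemma inv_gamma_nonneg: "a > 0 \<Longrightarrow> b > 0 \<Longrightarrow> inv_gamma_density a b x \<ge> 0"
  using Gamma_real_pos[of a] by (simp add: inv_gamma_density_def)

lemma inv_gamma_measurable: "inv_gamma_density a b \<in> borel_measurable borel"
  unfolding inv_gamma_density_def[abs_def] by measurable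

lemma inv_gamma_lborel:
  fixes a b :: real assumes a: "a > 0" and b: "b > 0"
  shows "integral\<^sup>L lborel (inv_gamma_density a b) = 1"
proof -
  have G: "Gamma a > 0" using a by (rule Gamma_real_pos)
  have eqf: "inv_gamma_density a b = (\<lambda>x. if x \<in> {0<..} then
      (b powr a * x powr (-a-1) * exp (-b/x)) * (1 / Gamma a) else 0)"
    by (auto simp: inv_gamma_density_def fun_eq_iff field_simps)
  have "((\<lambda>x. (b powr a * x powr (-a-1) * exp (-b/x)) * (1 / Gamma a)) has_integral Gamma a * (1 / Gamma a)) {0<..}"
    by (rule has_integral_mult_left) (rule inv_gamma_Ioi[OF a b])
  then have "(inv_gamma_density a b has_integral 1) UNIV"
    unfolding eqf has_integral_restrict_UNIV using G by simp
  then have nn: "(\<integral>\<^sup>+ x. ennreal (inv_gamma_density a b x) \<partial>lborel) = ennreal 1"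
    by (rule nn_integral_has_integral_lborel[OF inv_gamma_measurable inv_gamma_nonneg[OF a b]])
  have m: "inv_gamma_density a b \<in> borel_measurable lborel"
    using inv_gamma_measurable by simp
  have i: "integrable lborel (inv_gamma_density a b)"
    by (rule integrableI_nn_integral_finite[where x = 1]) (use m nn inv_gamma_nonneg[OF a b] in auto)
  have "integral\<^sup>L lborel (inv_gamma_density a b) = enn2real (integral\<^sup>N lborel (inv_gamma_density a b))"
    by (rule integral_eq_nn_integral) (use m inv_gamma_nonneg[OF a b] in auto)
  then show ?thesis using nn by simp
qed

lemma inv_props:
  fixes A :: "real^'n^'n" assumes "invertible A"
  shows "A ** matrix_inv A = mat 1 \<and> matrix_inv A ** A = mat 1"
  using assms unfolding invertible_def matrix_inv_def by (rule someI_ex)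

lemma pd_invertible:
  fixes C :: "real^'n^'n" assumes pd: "\<forall>x. x \<noteq> 0 \<longrightarrow> x \<bullet> (C *v x) > 0"
  shows "invertible C"
proof -
  have "inj ((*v) C)"
  proof (rule injI)
    fix x y assume "C *v x = C *v y"
    then have "C *v (x - y) = 0" by (simp add: matrix_vector_mult_diff_distrib)
    then show "x = y" using pd[rule_format, of "x - y"] by auto
  qed
  then show ?thesis
    using invertible_left_inverse matrix_left_invertible_injective by blast
qed

lemma det_scale:
  fixes A :: "real^'n^'n"
  shows "det (k *\<^sub>R A) = k ^ CARD('n) * det A"
  unfolding det_def by (simp add: prod.distrib sum_distrib_left mult_ac)

lemma inv_scale_apply:
  fixes A :: "real^'n^'n" assumes A: "invertible A" and k: "k \<noteq> 0"
  shows "matrix_inv (k *\<^sub>R A) *v x = (1/k) *\<^sub>R (matrix_inv A *v x)"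
proof -
  have kA: "invertible (k *\<^sub>R A)" by (rule scalar_invertible[OF k A])
  define y where "y = matrix_inv (k *\<^sub>R A) *v x"
  have "(k *\<^sub>R A) *v y = x"
    unfolding y_def matrix_vector_mul_assoc using inv_props[OF kA] by simp
  then have "k *\<^sub>R (A *v y) = x" by (simp add: scaleR_matrix_vector_assoc)
  then have "matrix_inv A *v x = k *\<^sub>R (matrix_inv A *v (A *v y))"
    by (metis matrix_vector_mult_scaleR)
  also have "matrix_inv A *v (A *v y) = y"
    unfolding matrix_vector_mul_assoc using inv_props[OF A] by simp
  finally show ?thesis using k unfolding y_def by simp
qed

lemma quad_pos:
  fixes C :: "real^'n^'n" assumes pd: "\<forall>x. x \<noteq> 0 \<longrightarrow> x \<bullet> (C *v x) > 0"
    and xi: "xi \<noteq> 0"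
  shows "xi \<bullet> (matrix_inv C *v xi) > 0"
proof -
  have C: "invertible C" by (rule pd_invertible[OF pd])
  define y where "y = matrix_inv C *v xi"
  have Cy: "C *v y = xi"
    unfolding y_def matrix_vector_mul_assoc using inv_props[OF C] by simp
  then have "y \<noteq> 0" using xi by auto
  then have "y \<bullet> (C *v y) > 0" using pd by auto
  then show ?thesis unfolding y_def[symmetric] using Cy by (simp add: inner_commute)
qed

definition cfac :: "real \<Rightarrow> real \<Rightarrow> real \<Rightarrow> real \<Rightarrow> real" where
  "cfac q N d r = q / 2 * (2 * pi) powr (- N / 2) * d powr (- 1 / 2) * r powr ((q / 2 - 1) * N / 2)"

lemma factor:
  fixes C0 :: "real^'n^'n" and xi :: "real^'n"
  assumes t: "\<tau> > 0" and q: "q > 0" and C: "invertible C0"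
    and r: "xi \<bullet> (matrix_inv C0 *v xi) > 0"
  shows "qED_density q ((\<tau> powr (2 / q)) *\<^sub>R C0) xi =
    cfac q (real CARD('n)) \<bar>det C0\<bar> (xi \<bullet> (matrix_inv C0 *v xi)) * \<tau> powr (- real CARD('n) / 2)
      * exp (- ((xi \<bullet> (matrix_inv C0 *v xi)) powr (q / 2) / 2) / \<tau>)"
proof -
  define N where "N = real CARD('n)"
  define k where "k = \<tau> powr (2 / q)"
  define r0 where "r0 = xi \<bullet> (matrix_inv C0 *v xi)"
  define d where "d = \<bar>det C0\<bar>"
  have k: "k > 0" unfolding k_def using t by simp
  have r0: "r0 > 0" using r unfolding r0_def .
  have d: "d > 0" unfolding d_def using C invertible_det_nz by auto
  have kp: "k powr s = \<tau> powr (2 / q * s)" for s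
    unfolding k_def using t by (simp add: powr_powr)
  have rr: "xi \<bullet> (matrix_inv (k *\<^sub>R C0) *v xi) = r0 / k"
    unfolding r0_def using inv_scale_apply[OF C, of k xi] k by simp
  have dd: "\<bar>det (k *\<^sub>R C0)\<bar> powr (- 1 / 2) = k powr (- N / 2) * d powr (- 1 / 2)"
  proof -
    have "\<bar>det (k *\<^sub>R C0)\<bar> = k powr N * d"
      unfolding det_scale d_def N_def using k by (simp add: abs_mult powr_realpow)
    then show ?thesis using k d by (simp add: powr_mult powr_powr)
  qed
  have p1: "(r0 / k) powr ((q / 2 - 1) * N / 2) = r0 powr ((q / 2 - 1) * N / 2) * k powr (- ((q / 2 - 1) * N / 2))"
    using r0 k by (simp add: powr_divide powr_minus_divide)
  have p2: "(r0 / k) powr (q / 2) = r0 powr (q / 2) / \<tau>"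
    using r0 k q t by (simp add: powr_divide kp)
  have p3: "k powr (- N / 2) * k powr (- ((q / 2 - 1) * N / 2)) = \<tau> powr (- N / 2)"
  proof -
    have "k powr (- N / 2) * k powr (- ((q / 2 - 1) * N / 2)) = k powr (- N / 2 + - ((q / 2 - 1) * N / 2))"
      by (rule powr_add[symmetric])
    also have "\<dots> = \<tau> powr (2 / q * (- N / 2 + - ((q / 2 - 1) * N / 2)))" by (rule kp)
    also have "2 / q * (- N / 2 + - ((q / 2 - 1) * N / 2)) = - N / 2" using q by (simp add: field_simps)
    finally show ?thesis .
  qed
  have "qED_density q (k *\<^sub>R C0) xi =
     q / 2 * (2 * pi) powr (- N / 2) * (k powr (- N / 2) * d powr (- 1 / 2))
        * (r0 powr ((q / 2 - 1) * N / 2) * k powr (- ((q / 2 - 1) * N / 2))) * exp (- 1 / 2 * (r0 powr (q / 2) / \<tau>))"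
    unfolding qED_density_def Let_def N_def[symmetric] rr dd p1 p2 by simp
  also have "\<dots> = cfac q N d r0 * (k powr (- N / 2) * k powr (- ((q / 2 - 1) * N / 2)))
      * exp (- (r0 powr (q / 2) / 2) / \<tau>)"
    unfolding cfac_def by (simp add: mult_ac)
  also note p3
  finally show ?thesis unfolding N_def k_def r0_def d_def .
qed

theorem proposition5p1:
  fixes q \<alpha> \<beta> :: real and L :: nat and C0 :: "real^'n^'n" and xi :: "nat \<Rightarrow> real^'n"
  assumes "1 \<le> q" and "q \<le> 2"
    and "\<alpha> > 0" and "\<beta> > 0"
    and "transpose C0 = C0"
    and "\<forall>x. x \<noteq> 0 \<longrightarrow> x \<bullet> (C0 *v x) > 0"
    and "\<forall>l<L. xi l \<noteq> 0"
  shows "\<forall>\<tau>. posterior_density q \<alpha> \<beta> C0 L xi \<tau> =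
           inv_gamma_density (\<alpha> + real CARD('n) * real L / 2)
             (\<beta> + 1 / 2 * (\<Sum>l<L. (xi l \<bullet> (matrix_inv C0 *v xi l)) powr (q / 2))) \<tau>"
proof
  fix \<tau> :: real
  have q: "q > 0" using assms(1) by simp
  have a: "\<alpha> > 0" and b: "\<beta> > 0" using assms(3,4) by auto
  have C: "invertible C0" by (rule pd_invertible[OF assms(6)])
  define N where "N = real CARD('n)"
  define r where "r = (\<lambda>l. xi l \<bullet> (matrix_inv C0 *v xi l))"
  define d where "d = \<bar>det C0\<bar>"
  define S where "S = (\<Sum>l<L. r l powr (q / 2))"
  define a' where "a' = \<alpha> + N * real L / 2"
  define b' where "b' = \<beta> + 1 / 2 * S"
  define P where "P = (\<Prod>l<L. cfac q N d (r l))"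
  define K where "K = \<beta> powr \<alpha> / Gamma \<alpha> * P * Gamma a' / b' powr a'"
  have rpos: "l < L \<Longrightarrow> r l > 0" for l
    unfolding r_def using quad_pos[OF assms(6)] assms(7) by auto
  have d: "d > 0" unfolding d_def using C invertible_det_nz by auto
  have N: "N \<ge> 0" unfolding N_def by simp
  have S: "S \<ge> 0" unfolding S_def by (intro sum_nonneg) simp
  have a': "a' > 0" unfolding a'_def using a N by (intro add_pos_nonneg) auto
  have b': "b' > 0" unfolding b'_def using b S by simp
  have cpos: "cfac q N d (r l) > 0" if "l < L" for l
    using rpos[OF that] q d unfolding cfac_def by simp
  have P: "P > 0" unfolding P_def using cpos by (intro prod_pos) auto
  have K: "K > 0" unfolding K_def using P a' b' a b Gamma_real_pos[OF a] Gamma_real_pos[OF a'] by simp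
  have joint: "joint_density q \<alpha> \<beta> C0 L xi = (\<lambda>t. K * inv_gamma_density a' b' t)"
  proof
    fix t :: real
    show "joint_density q \<alpha> \<beta> C0 L xi t = K * inv_gamma_density a' b' t"
    proof (cases "t > 0")
      case False
      then show ?thesis by (simp add: joint_density_def inv_gamma_density_def)
    next
      case t: True
      have "(\<Prod>l<L. qED_density q ((t powr (2 / q)) *\<^sub>R C0) (xi l)) =
          (\<Prod>l<L. cfac q N d (r l) * t powr (- N / 2) * exp (- (r l powr (q / 2) / 2) / t))"
        by (rule prod.cong[OF refl]) (unfold N_def d_def r_def, rule factor[OF t q C], simp add: rpos[unfolded r_def])
      also have "\<dots> = P * (t powr (- N / 2)) ^ L * exp (- (S / 2) / t)"
      proof -
        have "(\<Prod>l<L. cfac q N d (r l) * t powr (- N / 2) * exp (- (r l powr (q / 2) / 2) / t)) =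
            (\<Prod>l<L. cfac q N d (r l)) * (\<Prod>l<L. t powr (- N / 2)) * (\<Prod>l<L. exp (- (r l powr (q / 2) / 2) / t))"
          by (simp only: prod.distrib)
        also have "(\<Prod>l<L. t powr (- N / 2)) = (t powr (- N / 2)) ^ L" by simp
        also have "(\<Prod>l<L. exp (- (r l powr (q / 2) / 2) / t)) = exp (\<Sum>l<L. - (r l powr (q / 2) / 2) / t)"
          by (rule exp_sum[symmetric]) simp
        also have "(\<Sum>l<L. - (r l powr (q / 2) / 2) / t) = - (S / 2) / t"
          unfolding S_def by (simp add: sum_divide_distrib[symmetric] sum_negf)
        finally show ?thesis unfolding P_def .
      qed
      also have "(t powr (- N / 2)) ^ L = t powr (- N * real L / 2)"
        using t by (simp add: powr_power mult_ac)
      finally have pr: "(\<Prod>l<L. qED_density q ((t powr (2 / q)) *\<^sub>R C0) (xi l)) =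
          P * t powr (- N * real L / 2) * exp (- (S / 2) / t)" .
      have e1: "t powr (- \<alpha> - 1) * t powr (- N * real L / 2) = t powr (- a' - 1)"
      proof -
        have "t powr (- \<alpha> - 1) * t powr (- N * real L / 2) = t powr ((- \<alpha> - 1) + (- N * real L / 2))"
          by (rule powr_add[symmetric])
        also have "(- \<alpha> - 1) + (- N * real L / 2) = - a' - 1" unfolding a'_def by simp
        finally show ?thesis .
      qed
      have e2: "exp (- \<beta> / t) * exp (- (S / 2) / t) = exp (- b' / t)"
      proof -
        have "exp (- \<beta> / t) * exp (- (S / 2) / t) = exp (- \<beta> / t + - (S / 2) / t)"
          by (rule exp_add[symmetric])
        also have "- \<beta> / t + - (S / 2) / t = - b' / t" unfolding b'_def using t by (simp add: field_simps)
        finally show ?thesis .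
      qed
      have "joint_density q \<alpha> \<beta> C0 L xi t =
          \<beta> powr \<alpha> / Gamma \<alpha> * P * (t powr (- \<alpha> - 1) * t powr (- N * real L / 2)) * (exp (- \<beta> / t) * exp (- (S / 2) / t))"
        unfolding joint_density_def pr using t by (simp add: inv_gamma_density_def mult_ac)
      also have "\<dots> = (\<beta> powr \<alpha> / Gamma \<alpha> * P) * (t powr (- a' - 1) * exp (- b' / t))"
        unfolding e1 e2 by simp
      also have "\<dots> = (\<beta> powr \<alpha> / Gamma \<alpha> * P) * (Gamma a' / b' powr a' * (b' powr a' / Gamma a')) * (t powr (- a' - 1) * exp (- b' / t))"
        using Gamma_real_pos[OF a'] b' by simp
      also have "\<dots> = K * inv_gamma_density a' b' t"
        unfolding K_def inv_gamma_density_def using t by (simp only: if_True mult_ac times_divide_eq_right times_divide_eq_left)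
      finally show ?thesis .
    qed
  qed
  have I: "integral\<^sup>L lborel (joint_density q \<alpha> \<beta> C0 L xi) = K"
    unfolding joint using inv_gamma_lborel[OF a' b'] by simp
  show "posterior_density q \<alpha> \<beta> C0 L xi \<tau> =
           inv_gamma_density (\<alpha> + real CARD('n) * real L / 2)
             (\<beta> + 1 / 2 * (\<Sum>l<L. (xi l \<bullet> (matrix_inv C0 *v xi l)) powr (q / 2))) \<tau>"
    unfolding posterior_density_def I using K
    by (simp add: joint a'_def b'_def S_def r_def N_def)
qed

end
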